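(* Let $f:[0,\infty)\to\mathbb{R}$ be a continuous superquadratic function and $\Phi:\mathbb{M}_n\to\mathbb{M}_m$ a unital positive linear map. Then for every positive semidefinite $A\in\mathbb{M}_n^+$, $$\mathrm{Tr}\, f(\Phi(A))\le \mathrm{Tr}\,\Phi(f(A))-\min\left\{\sum_{j=1}^{m}\Big\langle \Phi\big(f(|A-\langle\Phi(A)\mathbf{u}_j,\mathbf{u}_j\rangle I|)\big)\mathbf{u}_j,\mathbf{u}_j\Big\rangle\right\},$$ where the minimum is taken over all orthonormal bases $\{\mathbf{u}_1,\dots,\mathbf{u}_m\}$ of $\mathbb{C}^m$.
   Context: A function $f:[0,\infty)\to\mathbb{R}$ is called superquadratic if for every $s\ge 0$ there exists a constant $C_s\in\mathbb{R}$ such that $f(t)\ge f(s)+C_s(t-s)+f(|t-s|)$ for all $t\ge0$. A linear map $\Phi$ is positive if it maps positive semidefinite matrices to positive semidefinite matrices and unital if $\Phi(I)=I$. $f(X)$ is defined by the spectral functional calculus, $|X|=(X^*X)^{1/2}$, $\langle\cdot,\cdot\rangle$ is the standard inner product, and $\mathrm{Tr}$ is the usual matrix trace. *)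

theory Defs
  imports "HOL-Analysis.Analysis"
begin

text \<open>Complex square matrices of size n are modelled as complex^'n^'n, 'n a finite type
  with CARD('n) = n.\<close>

definition cinner :: "complex^'n \<Rightarrow> complex^'n \<Rightarrow> complex" where
  "cinner x y = (\<Sum>i\<in>UNIV. x$i * cnj (y$i))"

definition adj :: "complex^'n^'m \<Rightarrow> complex^'m^'n" where
  "adj A = (\<chi> i j. cnj (A$j$i))"

definition cscale :: "complex \<Rightarrow> complex^'n^'m \<Rightarrow> complex^'n^'m" where
  "cscale c A = (\<chi> i j. c * A$i$j)"

definition hermitian :: "complex^'n^'n \<Rightarrow> bool" where
  "hermitian A \<longleftrightarrow> adj A = A"

definition psd :: "complex^'n^'n \<Rightarrow> bool" where
  "psd A \<longleftrightarrow> hermitian A \<and> (\<forall>x. 0 \<le> Re (cinner (A *v x) x))"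

definition unitary :: "complex^'n^'n \<Rightarrow> bool" where
  "unitary U \<longleftrightarrow> adj U ** U = mat 1 \<and> U ** adj U = mat 1"

definition diagm :: "('n \<Rightarrow> complex) \<Rightarrow> complex^'n^'n" where
  "diagm d = (\<chi> i j. if i = j then d i else 0)"

definition matfun :: "(real \<Rightarrow> real) \<Rightarrow> complex^'n^'n \<Rightarrow> complex^'n^'n" where
  "matfun f A = (SOME B. \<exists>U d. unitary U \<and> A = U ** diagm (\<lambda>i. complex_of_real (d i)) ** adj U
      \<and> B = U ** diagm (\<lambda>i. complex_of_real (f (d i))) ** adj U)"

definition mabs :: "complex^'n^'n \<Rightarrow> complex^'n^'n" where
  "mabs X = matfun sqrt (adj X ** X)"

definition superquadratic :: "(real \<Rightarrow> real) \<Rightarrow> bool" where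
  "superquadratic f \<longleftrightarrow> (\<forall>s\<ge>0. \<exists>C. \<forall>t\<ge>0. f t \<ge> f s + C * (t - s) + f \<bar>t - s\<bar>)"

definition clinear_map :: "(complex^'n^'n \<Rightarrow> complex^'m^'m) \<Rightarrow> bool" where
  "clinear_map \<Phi> \<longleftrightarrow> (\<forall>X Y. \<Phi> (X + Y) = \<Phi> X + \<Phi> Y) \<and> (\<forall>c X. \<Phi> (cscale c X) = cscale c (\<Phi> X))"

definition positive_map :: "(complex^'n^'n \<Rightarrow> complex^'m^'m) \<Rightarrow> bool" where
  "positive_map \<Phi> \<longleftrightarrow> (\<forall>X. psd X \<longrightarrow> psd (\<Phi> X))"

definition unital_map :: "(complex^'n^'n \<Rightarrow> complex^'m^'m) \<Rightarrow> bool" where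
  "unital_map \<Phi> \<longleftrightarrow> \<Phi> (mat 1) = mat 1"

text \<open>Orthonormal bases of C^m, indexed by 'm (so they consist of exactly m vectors).\<close>
definition orthonormal_basis :: "('m \<Rightarrow> complex^'m) \<Rightarrow> bool" where
  "orthonormal_basis u \<longleftrightarrow> (\<forall>i j. cinner (u i) (u j) = (if i = j then 1 else 0))"

end

theory Submission
  imports Defs
begin

lemma cinner_add_left: "cinner (x + y) z = cinner x z + cinner y z"
  by (simp add: cinner_def sum.distrib distrib_right)
lemma cinner_add_right: "cinner x (y + z) = cinner x y + cinner x z"
  by (simp add: cinner_def sum.distrib distrib_left)
lemma cinner_diff_left: "cinner (x - y) z = cinner x z - cinner y z"
  by (simp add: cinner_def sum_subtractf left_diff_distrib)
lemma cinner_diff_right: "cinner x (y - z) = cinner x y - cinner x z"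
  by (simp add: cinner_def sum_subtractf right_diff_distrib)
lemma cinner_scale_left: "cinner (c *s x) y = c * cinner x y"
  by (simp add: cinner_def sum_distrib_left mult.assoc)
lemma cinner_scale_right: "cinner x (c *s y) = cnj c * cinner x y"
  by (simp add: cinner_def sum_distrib_left algebra_simps)
lemma cinner_zero_left[simp]: "cinner 0 y = 0"
  by (simp add: cinner_def)
lemma cinner_zero_right[simp]: "cinner x 0 = 0"
  by (simp add: cinner_def)
lemma cnj_cinner: "cnj (cinner x y) = cinner y x"
  by (simp add: cinner_def mult.commute)
lemma cinner_adj: "cinner (M *v x) y = cinner x (adj M *v y)"
  unfolding cinner_def adj_def matrix_vector_mult_def
  by (simp add: sum_distrib_left sum_distrib_right cnj_sum algebra_simps, subst sum.swap, simp add: algebra_simps)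

lemma cinner_self: "cinner x x = complex_of_real (norm x ^ 2)"
proof -
  have "cinner x x = (\<Sum>i\<in>UNIV. complex_of_real ((cmod (x$i))^2))"
    unfolding cinner_def by (simp add: complex_norm_square[symmetric])
  also have "\<dots> = complex_of_real (\<Sum>i\<in>UNIV. (cmod (x$i))^2)" by simp
  also have "(\<Sum>i\<in>UNIV. (cmod (x$i))^2) = norm x ^ 2"
    unfolding norm_vec_def L2_set_def by (simp add: sum_nonneg)
  finally show ?thesis .
qed

lemma cinner_self_eq0: "cinner x x = 0 \<longleftrightarrow> x = 0"
  by (simp add: cinner_self)

lemma adj_adj[simp]: "adj (adj A) = A"
  by (simp add: adj_def vec_eq_iff)
lemma adj_mult: "adj (A ** B) = adj B ** adj A"
  by (simp add: adj_def vec_eq_iff matrix_matrix_mult_def cnj_sum mult.commute)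
lemma adj_mat1[simp]: "adj (mat 1) = mat 1"
  by (simp add: adj_def vec_eq_iff mat_def)

lemma hermitian_real: "hermitian H \<Longrightarrow> cinner (H *v x) x = complex_of_real (Re (cinner (H *v x) x))"
proof -
  assume h: "hermitian H"
  have "cnj (cinner (H *v x) x) = cinner (H *v x) x"
    by (metis cinner_adj cnj_cinner h hermitian_def)
  then show ?thesis by (metis Reals_cnj_iff of_real_Re)
qed

definition dm :: "('n \<Rightarrow> real) \<Rightarrow> complex^'n^'n" where
  "dm d = diagm (\<lambda>i. complex_of_real (d i))"

definition LL :: "complex^'n^'n \<Rightarrow> ('n \<Rightarrow> real) \<Rightarrow> complex^'n^'n" where
  "LL U d = U ** dm d ** adj U"

lemma LL_entry: "LL U d $ i $ j = (\<Sum>k\<in>UNIV. U$i$k * complex_of_real (d k) * cnj (U$j$k))"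
proof -
  have "LL U d $ i $ j = (\<Sum>k\<in>UNIV. (\<Sum>l\<in>UNIV. U$i$l * (if l = k then complex_of_real (d l) else 0)) * cnj (U$j$k))"
    by (simp add: LL_def dm_def diagm_def matrix_matrix_mult_def adj_def)
  also have "\<dots> = (\<Sum>k\<in>UNIV. U$i$k * complex_of_real (d k) * cnj (U$j$k))"
    by (simp add: if_distrib cong: if_cong)
  finally show ?thesis .
qed

lemma LL_add: "LL U (\<lambda>i. x i + y i) = LL U x + LL U y"
  by (simp add: vec_eq_iff LL_entry sum.distrib algebra_simps)
lemma LL_scale: "LL U (\<lambda>i. c * x i) = cscale (complex_of_real c) (LL U x)"
  by (simp add: vec_eq_iff LL_entry cscale_def sum_distrib_left algebra_simps)

lemma unitary_col: "unitary U \<Longrightarrow> (\<Sum>k\<in>UNIV. U$i$k * cnj (U$j$k)) = (if i = j then 1 else 0)"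
proof -
  assume "unitary U"
  then have "(U ** adj U) $ i $ j = mat 1 $ i $ j" by (simp add: unitary_def)
  then show ?thesis by (simp add: matrix_matrix_mult_def adj_def mat_def)
qed
lemma unitary_row: "unitary U \<Longrightarrow> (\<Sum>k\<in>UNIV. cnj (U$k$i) * U$k$j) = (if i = j then 1 else 0)"
proof -
  assume "unitary U"
  then have "(adj U ** U) $ i $ j = mat 1 $ i $ j" by (simp add: unitary_def)
  then show ?thesis by (simp add: matrix_matrix_mult_def adj_def mat_def)
qed

lemma LL_one: "unitary U \<Longrightarrow> LL U (\<lambda>i. 1) = mat 1"
  by (simp add: vec_eq_iff LL_entry unitary_col mat_def)

lemma adj_LL: "adj (LL U d) = LL U d"
  by (simp add: vec_eq_iff LL_entry adj_def cnj_sum mult.commute mult.left_commute)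

lemma dm_mult: "dm d ** dm e = dm (\<lambda>i. d i * e i)"
proof -
  have "(\<Sum>k\<in>UNIV. (if i = k then complex_of_real (d i) else 0) * (if k = j then complex_of_real (e k) else 0))
     = (if i = j then complex_of_real (d i * e i) else 0)" for i j :: 'a
  proof -
    have "(\<Sum>k\<in>UNIV. (if i = k then complex_of_real (d i) else 0) * (if k = j then complex_of_real (e k) else 0))
      = (\<Sum>k\<in>UNIV. if k = i then (if i = j then complex_of_real (d i * e i) else 0) else 0)"
      by (rule sum.cong) auto
    then show ?thesis by simp
  qed
  then show ?thesis unfolding dm_def diagm_def matrix_matrix_mult_def by (simp add: vec_eq_iff)
qed

lemma LL_mult: "unitary U \<Longrightarrow> LL U d ** LL U e = LL U (\<lambda>i. d i * e i)"
proof -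
  assume u: "unitary U"
  have "LL U d ** LL U e = U ** dm d ** (adj U ** U) ** dm e ** adj U"
    by (simp add: LL_def matrix_mul_assoc)
  also have "\<dots> = U ** (dm d ** dm e) ** adj U" using u by (simp add: unitary_def matrix_mul_assoc)
  finally show ?thesis by (simp add: LL_def dm_mult)
qed

lemma mult_dm_right: "(X ** dm d) $ i $ j = X$i$j * complex_of_real (d j)"
proof -
  have "(X ** dm d) $ i $ j = (\<Sum>k\<in>UNIV. if k = j then X$i$j * complex_of_real (d j) else 0)"
    unfolding dm_def diagm_def matrix_matrix_mult_def by (simp only: vec_lambda_beta) (rule sum.cong, auto)
  then show ?thesis by simp
qed
lemma mult_dm_left: "(dm d ** X) $ i $ j = complex_of_real (d i) * X$i$j"
proof -
  have "(dm d ** X) $ i $ j = (\<Sum>k\<in>UNIV. if k = i then complex_of_real (d i) * X$i$j else 0)"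
    unfolding dm_def diagm_def matrix_matrix_mult_def by (simp only: vec_lambda_beta) (rule sum.cong, auto)
  then show ?thesis by simp
qed

lemma LL_unique:
  assumes u: "unitary U" and v: "unitary V" and eq: "LL U d = LL V e"
  shows "LL U (\<lambda>i. g (d i)) = LL V (\<lambda>i. g (e i))"
proof -
  define W where "W = adj V ** U"
  have uu: "adj U ** U = mat 1" "U ** adj U = mat 1" using u by (auto simp: unitary_def)
  have vv: "adj V ** V = mat 1" "V ** adj V = mat 1" using v by (auto simp: unitary_def)
  have "adj V ** LL U d ** U = W ** dm d"
    unfolding LL_def W_def by (simp add: matrix_mul_assoc[symmetric] uu)
  moreover have "adj V ** LL V e ** U = dm e ** W"
    unfolding LL_def W_def by (simp add: matrix_mul_assoc vv)
  ultimately have WD: "W ** dm d = dm e ** W" using eq by simp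
  have "W ** dm (\<lambda>i. g (d i)) = dm (\<lambda>i. g (e i)) ** W"
  proof -
    have "W$i$j * complex_of_real (g (d j)) = complex_of_real (g (e i)) * W$i$j" for i j
    proof -
      have "W$i$j * complex_of_real (d j) = complex_of_real (e i) * W$i$j"
        using arg_cong[OF WD, of "\<lambda>X. X$i$j"] by (simp add: mult_dm_right mult_dm_left)
      then have "W$i$j = 0 \<or> d j = e i" by (auto simp: mult.commute)
      then show ?thesis by auto
    qed
    then show ?thesis by (simp add: vec_eq_iff mult_dm_right mult_dm_left)
  qed
  have UVW: "U = V ** W" unfolding W_def by (simp add: matrix_mul_assoc vv)
  have "LL U (\<lambda>i. g (d i)) = V ** (W ** dm (\<lambda>i. g (d i))) ** adj U"
    unfolding LL_def by (subst (1) UVW, simp add: matrix_mul_assoc)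
  also have "\<dots> = V ** dm (\<lambda>i. g (e i)) ** (W ** adj U)"
    by (simp add: \<open>W ** dm (\<lambda>i. g (d i)) = dm (\<lambda>i. g (e i)) ** W\<close> matrix_mul_assoc)
  also have "W ** adj U = adj V"
    unfolding W_def by (simp add: matrix_mul_assoc[symmetric] uu)
  finally show ?thesis by (simp add: LL_def)
qed

lemma matfun_eq:
  assumes u: "unitary U"
  shows "matfun g (LL U d) = LL U (\<lambda>i. g (d i))"
proof -
  let ?P = "\<lambda>B. \<exists>U' d'. unitary U' \<and> LL U d = U' ** diagm (\<lambda>i. complex_of_real (d' i)) ** adj U'
      \<and> B = U' ** diagm (\<lambda>i. complex_of_real (g (d' i))) ** adj U'"
  have ex: "?P (LL U (\<lambda>i. g (d i)))" using u unfolding LL_def dm_def by blast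
  have "?P (matfun g (LL U d))" unfolding matfun_def by (rule someI[of ?P, OF ex])
  then obtain U' d' where "unitary U'" "LL U d = LL U' d'" "matfun g (LL U d) = LL U' (\<lambda>i. g (d' i))"
    unfolding LL_def dm_def by blast
  then show ?thesis using LL_unique[OF u] by metis
qed

lemma herm_inner: "hermitian H \<Longrightarrow> cinner (H *v x) y = cinner x (H *v y)"
  by (simp add: cinner_adj hermitian_def)

lemma cinner_axis: "cinner (axis i 1) w = cnj (w $ i)"
proof -
  have "cinner (axis i 1) w = (\<Sum>k\<in>UNIV. if k = i then cnj (w $ i) else 0)"
    unfolding cinner_def axis_def by (rule sum.cong) auto
  then show ?thesis by simp
qed

lemma cinner_sum_left: "cinner (sum g A) y = (\<Sum>a\<in>A. cinner (g a) y)"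
  unfolding cinner_def by (simp add: sum_component sum_distrib_right, rule sum.swap)

lemma exists_orth:
  fixes v :: "nat \<Rightarrow> complex^'n"
  assumes k: "k < CARD('n)"
    and on: "\<forall>i<k. \<forall>j<k. cinner (v i) (v j) = (if i = j then 1 else 0)"
  shows "\<exists>z. z \<noteq> 0 \<and> (\<forall>j<k. cinner z (v j) = 0)"
proof (rule ccontr)
  assume na: "\<not> ?thesis"
  define P where "P z = z - (\<Sum>j<k. cinner z (v j) *s v j)" for z :: "complex^'n"
  have orth: "cinner (P z) (v m) = 0" if m: "m < k" for z m
  proof -
    have "cinner (P z) (v m) = cinner z (v m) - (\<Sum>j<k. cinner z (v j) * cinner (v j) (v m))"
      unfolding P_def by (simp add: cinner_diff_left cinner_sum_left cinner_scale_left)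
    also have "(\<Sum>j<k. cinner z (v j) * cinner (v j) (v m)) = (\<Sum>j<k. if j = m then cinner z (v m) else 0)"
      by (rule sum.cong) (auto simp: on m)
    also have "\<dots> = cinner z (v m)" using m by simp
    finally show ?thesis by simp
  qed
  have P0: "P z = 0" for z using na orth by blast
  have comp: "1 = (\<Sum>j<k. v j $ i * cnj (v j $ i))" for i
  proof -
    have "axis i 1 = (\<Sum>j<k. cinner (axis i (1::complex)) (v j) *s v j)"
      using P0[of "axis i 1"] unfolding P_def by simp
    then have "axis i (1::complex) $ i = (\<Sum>j<k. cnj (v j $ i) *s v j) $ i"
      by (simp add: cinner_axis)
    then show ?thesis by (simp add: axis_def sum_component mult.commute)
  qed
  have "of_nat CARD('n) = (\<Sum>i\<in>(UNIV::'n set). (1::complex))" by simp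
  also have "\<dots> = (\<Sum>i\<in>UNIV. \<Sum>j<k. v j $ i * cnj (v j $ i))" using comp by simp
  also have "\<dots> = (\<Sum>j<k. cinner (v j) (v j))" unfolding cinner_def by (rule sum.swap)
  also have "\<dots> = of_nat k" using on by simp
  finally have "CARD('n) = k" by (simp only: of_nat_eq_iff)
  then show False using k by simp
qed

lemma quad_zero:
  fixes b c :: real
  assumes "\<forall>t. 2*t*b + t^2*c \<le> 0"
  shows "b = 0"
proof (rule ccontr)
  assume b: "b \<noteq> 0"
  define t where "t = b / (\<bar>c\<bar> + 1)"
  have pos: "\<bar>c\<bar> + 1 > 0" by simp
  have gen: "2*(b/D)*b + (b/D)^2*c = b^2 / D^2 * (2*D + c)" if "D > 0" for D :: real
    using that by (simp add: field_simps power2_eq_square)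
  have "2*t*b + t^2*c = b^2 / (\<bar>c\<bar>+1)^2 * (2*(\<bar>c\<bar>+1) + c)"
    unfolding t_def using gen[OF pos] .
  moreover have "b^2 / (\<bar>c\<bar>+1)^2 > 0" using b pos by simp
  moreover have "2*(\<bar>c\<bar>+1) + c > 0" by (cases "c \<ge> 0") auto
  ultimately have "2*t*b + t^2*c > 0" by (metis mult_pos_pos)
  then show False using assms by (meson not_le)
qed

lemma cscaleR: "r *\<^sub>R (z::complex) = complex_of_real r * z"
  by (simp add: scaleR_conv_of_real)
lemma scaleR_comp: "(r *\<^sub>R x) $ i = complex_of_real r * x $ i"
  by (simp add: cscaleR)

lemma cinner_scaleR_left: "cinner (r *\<^sub>R x) y = complex_of_real r * cinner x y"
  by (simp add: cinner_def sum_distrib_left cscaleR mult.assoc)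
lemma cinner_scaleR_right: "cinner x (r *\<^sub>R y) = complex_of_real r * cinner x y"
  by (simp add: cinner_def sum_distrib_left cscaleR algebra_simps)
lemma mv_scaleR: "(H::complex^'n^'m) *v (r *\<^sub>R x) = r *\<^sub>R (H *v x)"
  by (simp add: vec_eq_iff matrix_vector_mult_def cscaleR sum_distrib_left algebra_simps)

lemma expand_quad:
  "cinner ((H::complex^'n^'n) *v (x + t *\<^sub>R y)) (x + t *\<^sub>R y) = cinner (H*v x) x + complex_of_real t * cinner (H *v x) y
    + complex_of_real t * cinner (H*v y) x + complex_of_real (t^2) * cinner (H *v y) y"
  by (simp add: matrix_vector_right_distrib mv_scaleR cinner_add_left cinner_add_right
      cinner_scaleR_left cinner_scaleR_right power2_eq_square algebra_simps)

lemma cont_cinner_left: "continuous_on UNIV (\<lambda>x. cinner x w)"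
  unfolding cinner_def by (intro continuous_intros)

lemma cont_quad: "continuous_on UNIV (\<lambda>x. Re (cinner ((H::complex^'n^'n) *v x) x))"
  unfolding cinner_def matrix_vector_mult_def by (simp, intro continuous_intros)

lemma rayleigh:
  fixes H :: "complex^'n^'n" and v :: "nat \<Rightarrow> complex^'n" and l :: "nat \<Rightarrow> real"
  assumes h: "hermitian H" and ev: "\<forall>i<k. H *v v i = complex_of_real (l i) *s v i"
    and z: "z \<noteq> 0" and zW: "\<forall>j<k. cinner z (v j) = 0"
  shows "\<exists>x lam. (\<forall>j<k. cinner x (v j) = 0) \<and> cinner x x = 1 \<and> H *v x = complex_of_real lam *s x"
proof -
  define W where "W = {x. \<forall>j<k. cinner x (v j) = 0}"
  define S where "S = W \<inter> sphere 0 1"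
  define g where "g x = Re (cinner (H *v x) x)" for x
  have Wlin: "a *\<^sub>R x + b *\<^sub>R y \<in> W" if "x \<in> W" "y \<in> W" for a b x y
    using that by (simp add: W_def cinner_add_left cinner_scaleR_left)
  have Wdiff: "x - y \<in> W" if "x \<in> W" "y \<in> W" for x y
    using that by (simp add: W_def cinner_diff_left)
  have cW: "closed W"
  proof -
    have "W = (\<Inter>j\<in>{..<k}. {x. cinner x (v j) = 0})" unfolding W_def by auto
    moreover have "closed {x. cinner x (v j) = 0}" for j
      by (rule closed_Collect_eq[OF cont_cinner_left continuous_on_const])
    ultimately show ?thesis by auto
  qed
  have cS: "compact S" unfolding S_def
    using compact_Int_closed[OF compact_sphere cW] by (simp add: Int_commute)
  have neS: "S \<noteq> {}"
  proof -
    have "(1 / norm z) *\<^sub>R z \<in> S" using z zW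
      by (simp add: S_def W_def cinner_scaleR_left)
    then show ?thesis by blast
  qed
  obtain x0 where x0S: "x0 \<in> S" and x0max: "\<forall>y\<in>S. g y \<le> g x0"
    using continuous_attains_sup[OF cS neS continuous_on_subset[OF cont_quad[of H] subset_UNIV]]
    unfolding g_def by blast
  define lam where "lam = g x0"
  have x0W: "x0 \<in> W" and nx0: "norm x0 = 1" using x0S by (auto simp: S_def)
  have c00: "cinner x0 x0 = 1" using nx0 by (simp add: cinner_self)
  have hom: "g (r *\<^sub>R x) = r^2 * g x" for r x
    by (simp add: g_def mv_scaleR cinner_scaleR_left cinner_scaleR_right power2_eq_square)
  have bound: "g y \<le> lam * (norm y)^2" if "y \<in> W" for y
  proof (cases "y = 0")
    case True then show ?thesis by (simp add: g_def)
  next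
    case False
    have "(1 / norm y) *\<^sub>R y \<in> S" using False that Wlin[OF that that, of "1/norm y" 0]
      by (simp add: S_def)
    then have "g ((1 / norm y) *\<^sub>R y) \<le> lam" using x0max lam_def by blast
    then have "g y / (norm y)^2 \<le> lam" by (simp add: hom power_divide)
    then show ?thesis using False by (simp add: divide_le_eq)
  qed
  have key: "Re (cinner (H *v x0) y) = 0" if yW: "y \<in> W" and yo: "cinner y x0 = 0" for y
  proof -
    have xo: "cinner x0 y = 0" using yo cnj_cinner[of y x0] by simp
    define b where "b = Re (cinner (H *v x0) y)"
    define q where "q = Re (cinner y y)"
    have "cinner (H *v y) x0 = cnj (cinner (H *v x0) y)"
      by (metis cnj_cinner herm_inner[OF h])
    then have sym: "Re (cinner (H *v y) x0) = b" by (simp add: b_def)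
    have "2*t*b + t^2*(g y - lam * q) \<le> 0" for t
    proof -
      have ztW: "x0 + t *\<^sub>R y \<in> W" using Wlin[OF x0W yW, of 1 t] by simp
      have "cinner (x0 + t *\<^sub>R y) (x0 + t *\<^sub>R y) = 1 + complex_of_real (t^2) * cinner y y"
        by (simp add: cinner_add_left cinner_add_right cinner_scaleR_left cinner_scaleR_right c00 xo yo power2_eq_square)
      then have "Re (cinner (x0 + t *\<^sub>R y) (x0 + t *\<^sub>R y)) = 1 + t^2 * q"
        by (simp add: q_def)
      then have nz: "(norm (x0 + t *\<^sub>R y))^2 = 1 + t^2 * q"
        by (simp add: cinner_self)
      have "g (x0 + t *\<^sub>R y) = lam + 2*t*b + t^2 * g y"
        unfolding g_def expand_quad lam_def using sym
        by (simp add: g_def b_def)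
      then show ?thesis using bound[OF ztW] nz by (simp add: algebra_simps)
    qed
    then show ?thesis using quad_zero unfolding b_def by blast
  qed
  have key2: "cinner (H *v x0) y = 0" if yW: "y \<in> W" and yo: "cinner y x0 = 0" for y
  proof -
    have iyW: "\<i> *s y \<in> W" using yW by (simp add: W_def cinner_scale_left)
    have "Re (cinner (H *v x0) (\<i> *s y)) = 0" using key[OF iyW] yo by (simp add: cinner_scale_left)
    then have "Im (cinner (H *v x0) y) = 0" by (simp add: cinner_scale_right)
    moreover have "Re (cinner (H *v x0) y) = 0" using key[OF yW yo] .
    ultimately show ?thesis by (simp add: complex_eq_iff)
  qed
  define r where "r = H *v x0 - complex_of_real lam *s x0"
  have HW: "H *v x0 \<in> W" using x0W ev
    by (simp add: W_def herm_inner[OF h] cinner_scale_right)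
  have rW: "r \<in> W" unfolding r_def using HW x0W by (simp add: W_def cinner_diff_left cinner_scale_left)
  have "cinner (H *v x0) x0 = complex_of_real lam"
    using hermitian_real[OF h, of x0] unfolding lam_def g_def by simp
  then have rx: "cinner r x0 = 0" unfolding r_def by (simp add: cinner_diff_left cinner_scale_left c00)
  have xr: "cinner x0 r = 0" using rx cnj_cinner[of r x0] by simp
  have "cinner r r = cinner (H *v x0) r - complex_of_real lam * cinner x0 r"
    by (subst (1) r_def) (simp add: cinner_diff_left cinner_scale_left)
  also have "\<dots> = 0" using key2[OF rW rx] xr by simp
  finally have "r = 0" by (simp add: cinner_self_eq0)
  then have "H *v x0 = complex_of_real lam *s x0" unfolding r_def by simp
  then show ?thesis using x0W c00 unfolding W_def by blast
qed

lemma eig_build: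
  fixes H :: "complex^'n^'n"
  assumes h: "hermitian H"
  shows "k \<le> CARD('n) \<Longrightarrow> \<exists>v::nat \<Rightarrow> complex^'n. \<exists>l::nat\<Rightarrow>real.
     (\<forall>i<k. \<forall>j<k. cinner (v i) (v j) = (if i = j then 1 else 0)) \<and> (\<forall>i<k. H *v v i = complex_of_real (l i) *s v i)"
proof (induction k)
  case 0 then show ?case by auto
next
  case (Suc k)
  then obtain v l where on: "\<forall>i<k. \<forall>j<k. cinner (v i) (v j) = (if i = j then 1 else 0)"
    and ev: "\<forall>i<k. H *v v i = complex_of_real (l i) *s v i" by auto
  obtain z where z: "z \<noteq> 0" "\<forall>j<k. cinner z (v j) = 0"
    using exists_orth[of k v] Suc.prems on by auto
  obtain x lam where x: "\<forall>j<k. cinner x (v j) = 0" "cinner x x = 1" "H *v x = complex_of_real lam *s x"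
    using rayleigh[OF h ev z] by blast
  define v' where "v' = v(k := x)"
  define l' where "l' = l(k := lam)"
  have "\<forall>i<Suc k. \<forall>j<Suc k. cinner (v' i) (v' j) = (if i = j then 1 else 0)"
  proof (intro allI impI)
    fix i j assume "i < Suc k" "j < Suc k"
    moreover have "cinner (v j) x = 0" if "j < k" for j
      using x(1) that cnj_cinner[of x "v j"] by simp
    ultimately show "cinner (v' i) (v' j) = (if i = j then 1 else 0)"
      using on x(1,2) unfolding v'_def less_Suc_eq by auto
  qed
  moreover have "\<forall>i<Suc k. H *v v' i = complex_of_real (l' i) *s v' i"
    using ev x(3) by (auto simp: v'_def l'_def less_Suc_eq)
  ultimately show ?case by blast
qed

lemma spectral:
  fixes H :: "complex^'n^'n"
  assumes h: "hermitian H"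
  shows "\<exists>U d. unitary U \<and> H = LL U d"
proof -
  obtain v l where on: "\<forall>i<CARD('n). \<forall>j<CARD('n). cinner (v i) (v j) = (if i = j then 1 else 0)"
    and ev: "\<forall>i<CARD('n). H *v v i = complex_of_real (l i) *s v i"
    using eig_build[OF h, of "CARD('n)"] by auto
  obtain hh :: "'n \<Rightarrow> nat" where hb: "bij_betw hh UNIV {0..<CARD('n)}"
    using ex_bij_betw_finite_nat[of "UNIV::'n set"] by auto
  have hlt: "hh i < CARD('n)" for i using hb by (auto simp: bij_betw_def)
  have hinj: "hh i = hh j \<longleftrightarrow> i = j" for i j using hb by (auto simp: bij_betw_def inj_on_def)
  define U :: "complex^'n^'n" where "U = (\<chi> i j. v (hh j) $ i)"
  define d where "d j = l (hh j)" for j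
  have UU: "adj U ** U = mat 1"
  proof -
    have "(adj U ** U) $ i $ j = mat 1 $ i $ j" for i j
    proof -
      have "(adj U ** U) $ i $ j = cinner (v (hh j)) (v (hh i))"
        by (simp add: adj_def U_def matrix_matrix_mult_def cinner_def mult.commute)
      also have "\<dots> = (if i = j then 1 else 0)" using on hlt hinj by metis
      finally show ?thesis by (simp add: mat_def)
    qed
    then show ?thesis by (simp add: vec_eq_iff)
  qed
  have UU2: "U ** adj U = mat 1" using UU matrix_left_right_inverse by blast
  have u: "unitary U" using UU UU2 by (simp add: unitary_def)
  have HU: "H ** U = U ** dm d"
  proof -
    have "(H ** U) $ i $ j = (U ** dm d) $ i $ j" for i j
    proof -
      have "(H ** U) $ i $ j = (H *v v (hh j)) $ i"
        by (simp add: U_def matrix_matrix_mult_def matrix_vector_mult_def)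
      also have "\<dots> = complex_of_real (l (hh j)) * v (hh j) $ i" using ev hlt by simp
      finally show ?thesis by (simp add: mult_dm_right U_def d_def mult.commute)
    qed
    then show ?thesis by (simp add: vec_eq_iff)
  qed
  have "H = H ** U ** adj U" by (simp add: matrix_mul_assoc[symmetric] UU2)
  also have "\<dots> = LL U d" by (simp add: HU LL_def)
  finally show ?thesis using u by blast
qed

definition colv :: "complex^'n^'n \<Rightarrow> 'n \<Rightarrow> complex^'n" where
  "colv U j = (\<chi> i. U$i$j)"

lemma colv_orth: assumes "unitary U" shows "cinner (colv U i) (colv U j) = (if i = j then 1 else 0)"
proof -
  have "cinner (colv U i) (colv U j) = (\<Sum>k\<in>UNIV. cnj (U$k$j) * U$k$i)"
    unfolding colv_def cinner_def by (simp add: mult.commute)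
  then show ?thesis using unitary_row[OF assms, of j i] by auto
qed

lemma LL_col: assumes u: "unitary U" shows "LL U d *v colv U j = complex_of_real (d j) *s colv U j"
proof -
  have "LL U d ** U = U ** dm d"
    using u by (simp add: LL_def unitary_def matrix_mul_assoc[symmetric])
  have "(LL U d *v colv U j) $ i = (complex_of_real (d j) *s colv U j) $ i" for i
  proof -
    have "(LL U d *v colv U j) $ i = (LL U d ** U) $ i $ j"
      by (simp add: colv_def matrix_matrix_mult_def matrix_vector_mult_def)
    also have "\<dots> = U $ i $ j * complex_of_real (d j)" using \<open>LL U d ** U = U ** dm d\<close> by (simp add: mult_dm_right)
    finally show ?thesis by (simp add: colv_def mult.commute)
  qed
  then show ?thesis by (simp add: vec_eq_iff)
qed

lemma trace_LL: assumes u: "unitary U" shows "trace (LL U d) = (\<Sum>j\<in>UNIV. complex_of_real (d j))"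
proof -
  have "trace (LL U d) = trace (adj U ** (U ** dm d))" unfolding LL_def by (rule trace_mul_sym)
  also have "\<dots> = trace (dm d)" using u by (simp add: matrix_mul_assoc unitary_def)
  finally show ?thesis by (simp add: trace_def dm_def diagm_def)
qed

lemma trace_cols: assumes u: "unitary U"
  shows "(\<Sum>j\<in>UNIV. cinner (M *v colv U j) (colv U j)) = trace M"
proof -
  have "(\<Sum>j\<in>UNIV. cinner (M *v colv U j) (colv U j)) = trace (adj U ** (M ** U))"
  proof -
    have "cinner (M *v colv U j) (colv U j) = (adj U ** (M ** U)) $ j $ j" for j
      unfolding cinner_def colv_def matrix_vector_mult_def matrix_matrix_mult_def adj_def
      by (simp only: vec_lambda_beta mult.commute)
    then show ?thesis by (simp add: trace_def)
  qed
  also have "\<dots> = trace ((M ** U) ** adj U)" by (rule trace_mul_sym)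
  also have "\<dots> = trace M" using u by (simp add: unitary_def matrix_mul_assoc[symmetric])
  finally show ?thesis .
qed

lemma dm_mv: "dm d *v y = (\<chi> k. complex_of_real (d k) * y $ k)"
proof -
  have "(dm d *v y) $ k = complex_of_real (d k) * y $ k" for k
  proof -
    have "(dm d *v y) $ k = (\<Sum>j\<in>UNIV. if j = k then complex_of_real (d k) * y $ k else 0)"
      unfolding dm_def diagm_def matrix_vector_mult_def by (simp only: vec_lambda_beta) (rule sum.cong, auto)
    then show ?thesis by simp
  qed
  then show ?thesis by (simp add: vec_eq_iff)
qed

lemma psd_LL: assumes "\<forall>i. d i \<ge> 0" shows "psd (LL U d)"
proof -
  have "0 \<le> Re (cinner (LL U d *v x) x)" for x
  proof -
    define y where "y = adj U *v x"
    have "cinner (LL U d *v x) x = cinner (dm d *v y) y"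
      unfolding LL_def y_def by (simp add: matrix_vector_mul_assoc[symmetric] cinner_adj)
    also have "\<dots> = (\<Sum>k\<in>UNIV. complex_of_real (d k * (cmod (y$k))^2))"
      by (simp add: dm_mv cinner_def complex_norm_square[symmetric] mult.assoc)
    finally have "Re (cinner (LL U d *v x) x) = (\<Sum>k\<in>UNIV. d k * (cmod (y$k))^2)" by simp
    also have "\<dots> \<ge> 0" using assms by (intro sum_nonneg) simp
    finally show ?thesis .
  qed
  then show ?thesis by (simp add: psd_def hermitian_def adj_LL)
qed

lemma LL_eig_nonneg: assumes u: "unitary U" and p: "psd (LL U d)" shows "d j \<ge> 0"
proof -
  have "0 \<le> Re (cinner (LL U d *v colv U j) (colv U j))" using p by (simp add: psd_def)
  then show ?thesis using u by (simp add: LL_col cinner_scale_left colv_orth)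
qed

lemma cscale_mv: "cscale c X *v u = c *s (X *v u)"
  by (simp add: vec_eq_iff cscale_def matrix_vector_mult_def sum_distrib_left mult.assoc)

lemma mv_add: "(X + Y) *v u = X *v u + Y *v u"
  by (simp add: vec_eq_iff matrix_vector_mult_def sum.distrib distrib_right)

definition G :: "complex^'m \<Rightarrow> complex^'m^'m \<Rightarrow> real" where
  "G u X = Re (cinner (X *v u) u)"

lemma G_add: "G u (X + Y) = G u X + G u Y"
  by (simp add: G_def mv_add cinner_add_left)
lemma G_scale: "G u (cscale (complex_of_real r) X) = r * G u X"
  by (simp add: G_def cscale_mv cinner_scale_left)
lemma G_one: "cinner u u = 1 \<Longrightarrow> G u (mat 1) = 1"
  by (simp add: G_def)
lemma G_psd: "psd X \<Longrightarrow> G u X \<ge> 0"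
  by (simp add: G_def psd_def)

lemma Phi_add: "clinear_map \<Phi> \<Longrightarrow> \<Phi> (X + Y) = \<Phi> X + \<Phi> Y"
  by (simp add: clinear_map_def)
lemma Phi_scale: "clinear_map \<Phi> \<Longrightarrow> \<Phi> (cscale c X) = cscale c (\<Phi> X)"
  by (simp add: clinear_map_def)

lemma diff_cscale: "X - cscale c Y = X + cscale (- c) Y"
  by (simp add: vec_eq_iff cscale_def)

lemma F_form:
  assumes u: "unitary V"
  shows "matfun f (mabs (LL V a - cscale (complex_of_real s) (mat 1))) = LL V (\<lambda>k. f \<bar>a k - s\<bar>)"
proof -
  have e: "LL V a - cscale (complex_of_real s) (mat 1) = LL V (\<lambda>k. a k + (-s) * 1)"
    by (simp only: LL_add LL_scale LL_one[OF u] diff_cscale of_real_minus)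
  have "mabs (LL V a - cscale (complex_of_real s) (mat 1)) = LL V (\<lambda>k. sqrt ((a k + (-s)*1) * (a k + (-s)*1)))"
    unfolding mabs_def e adj_LL LL_mult[OF u] matfun_eq[OF u] ..
  also have "\<dots> = LL V (\<lambda>k. \<bar>a k - s\<bar>)" by simp
  finally show ?thesis by (simp add: matfun_eq[OF u])
qed

lemma key_ineq:
  fixes \<Phi> :: "complex^'n^'n \<Rightarrow> complex^'m^'m"
  assumes lin: "clinear_map \<Phi>" and pos: "positive_map \<Phi>" and un: "unital_map \<Phi>"
    and V: "unitary V" and a0: "\<forall>k. a k \<ge> 0" and u1: "cinner u u = 1"
    and sq: "superquadratic f" and s: "s = G u (\<Phi> (LL V a))" and s0: "s \<ge> 0"
  shows "f s \<le> G u (\<Phi> (LL V (\<lambda>k. f (a k)))) - G u (\<Phi> (LL V (\<lambda>k. f \<bar>a k - s\<bar>)))"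
proof -
  obtain C where C: "\<forall>t\<ge>0. f t \<ge> f s + C * (t - s) + f \<bar>t - s\<bar>"
    using sq s0 unfolding superquadratic_def by blast
  define m where "m = (\<lambda>k. f (a k) + (-(f s)) * 1 + (-C) * a k + (C * s) * 1 + (-1) * f \<bar>a k - s\<bar>)"
  have m0: "\<forall>k. m k \<ge> 0" using C a0 unfolding m_def by (auto simp: algebra_simps)
  have LLm: "LL V m = LL V (\<lambda>k. f (a k)) + cscale (complex_of_real (-(f s))) (mat 1)
     + cscale (complex_of_real (-C)) (LL V a) + cscale (complex_of_real (C * s)) (mat 1)
     + cscale (complex_of_real (-1)) (LL V (\<lambda>k. f \<bar>a k - s\<bar>))"
    unfolding m_def by (simp only: LL_add LL_scale LL_one[OF V])
  have "psd (\<Phi> (LL V m))" using pos psd_LL[OF m0] by (simp add: positive_map_def)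
  then have "G u (\<Phi> (LL V m)) \<ge> 0" by (rule G_psd)
  also have "G u (\<Phi> (LL V m)) = G u (\<Phi> (LL V (\<lambda>k. f (a k)))) + (-(f s)) * G u (mat 1)
     + (-C) * G u (\<Phi> (LL V a)) + (C * s) * G u (mat 1) + (-1) * G u (\<Phi> (LL V (\<lambda>k. f \<bar>a k - s\<bar>)))"
    unfolding LLm using un by (simp only: Phi_add[OF lin] Phi_scale[OF lin] G_add G_scale unital_map_def)
  finally show ?thesis using G_one[OF u1] s by simp
qed

lemma upper_s:
  fixes \<Phi> :: "complex^'n^'n \<Rightarrow> complex^'m^'m"
  assumes lin: "clinear_map \<Phi>" and pos: "positive_map \<Phi>" and un: "unital_map \<Phi>"
    and V: "unitary V" and a0: "\<forall>k. a k \<ge> 0" and u1: "cinner u u = 1"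
  shows "G u (\<Phi> (LL V a)) \<le> sum a UNIV"
proof -
  define T where "T = sum a UNIV"
  have m0: "\<forall>k. T * 1 + (-1) * a k \<ge> 0" using a0 unfolding T_def
    by (auto intro!: member_le_sum)
  have LLm: "LL V (\<lambda>k. T * 1 + (-1) * a k) = cscale (complex_of_real T) (mat 1) + cscale (complex_of_real (-1)) (LL V a)"
    by (simp only: LL_add LL_scale LL_one[OF V])
  have "psd (\<Phi> (LL V (\<lambda>k. T * 1 + (-1) * a k)))" using pos psd_LL[OF m0] by (simp add: positive_map_def)
  then have "G u (\<Phi> (LL V (\<lambda>k. T * 1 + (-1) * a k))) \<ge> 0" by (rule G_psd)
  also have "G u (\<Phi> (LL V (\<lambda>k. T * 1 + (-1) * a k))) = T * G u (mat 1) + (-1) * G u (\<Phi> (LL V a))"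
    unfolding LLm using un by (simp only: Phi_add[OF lin] Phi_scale[OF lin] G_add G_scale unital_map_def)
  finally show ?thesis using G_one[OF u1] unfolding T_def by simp
qed

lemma lower_F:
  fixes \<Phi> :: "complex^'n^'n \<Rightarrow> complex^'m^'m"
    and a :: "'n \<Rightarrow> real" and f :: "real \<Rightarrow> real" and s K :: real
  assumes lin: "clinear_map \<Phi>" and pos: "positive_map \<Phi>" and un: "unital_map \<Phi>"
    and V: "unitary V" and a0: "\<forall>k. a k \<ge> 0" and u1: "cinner u u = 1"
    and s0: "0 \<le> s" and sT: "s \<le> sum a UNIV" and K: "\<forall>x\<in>{0..sum a UNIV}. \<bar>f x\<bar> \<le> K"
  shows "G u (\<Phi> (LL V (\<lambda>k. f \<bar>a k - s\<bar>))) \<ge> -K"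
proof -
  define T where "T = sum a UNIV"
  have aT: "a k \<le> T" for k using a0 unfolding T_def by (auto intro!: member_le_sum)
  have m0: "\<forall>k. f \<bar>a k - s\<bar> + K * 1 \<ge> 0"
  proof
    fix k
    have "a k \<ge> 0" using a0 by simp
    then have "\<bar>a k - s\<bar> \<in> {0..T}" using aT[of k] s0 sT unfolding T_def by (simp add: abs_le_iff)
    then show "f \<bar>a k - s\<bar> + K * 1 \<ge> 0" using K unfolding T_def by (metis abs_le_iff add.commute diff_ge_0_iff_ge diff_minus_eq_add mult_1_right)
  qed
  have LLm: "LL V (\<lambda>k. f \<bar>a k - s\<bar> + K * 1) = LL V (\<lambda>k. f \<bar>a k - s\<bar>) + cscale (complex_of_real K) (mat 1)"
    by (simp only: LL_add LL_scale LL_one[OF V])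
  have "psd (\<Phi> (LL V (\<lambda>k. f \<bar>a k - s\<bar> + K * 1)))" using pos psd_LL[OF m0] by (simp add: positive_map_def)
  then have "G u (\<Phi> (LL V (\<lambda>k. f \<bar>a k - s\<bar> + K * 1))) \<ge> 0" by (rule G_psd)
  also have "G u (\<Phi> (LL V (\<lambda>k. f \<bar>a k - s\<bar> + K * 1))) = G u (\<Phi> (LL V (\<lambda>k. f \<bar>a k - s\<bar>))) + K * G u (mat 1)"
    unfolding LLm using un by (simp only: Phi_add[OF lin] Phi_scale[OF lin] G_add G_scale unital_map_def)
  finally show ?thesis using G_one[OF u1] by simp
qed

theorem proposition2p9:
  fixes f :: "real \<Rightarrow> real"
    and \<Phi> :: "complex^'n^'n \<Rightarrow> complex^'m^'m"
    and A :: "complex^'n^'n"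
  assumes "continuous_on {0..} f"
    and "superquadratic f"
    and "clinear_map \<Phi>" and "positive_map \<Phi>" and "unital_map \<Phi>"
    and "psd A"
  shows "Re (trace (matfun f (\<Phi> A)))
     \<le> Re (trace (\<Phi> (matfun f A)))
       - (INF u \<in> {u. orthonormal_basis u}.
            (\<Sum>j\<in>UNIV. Re (cinner (\<Phi> (matfun f (mabs (A - cscale (cinner (\<Phi> A *v u j) (u j)) (mat 1)))) *v u j) (u j))))"
proof -
  note cf = assms(1) and sq = assms(2) and lin = assms(3) and pos = assms(4) and un = assms(5) and pA = assms(6)
  obtain V a where V: "unitary V" and AV: "A = LL V a"
    using spectral pA unfolding psd_def by blast
  have a0: "\<forall>k. a k \<ge> 0" using LL_eig_nonneg[OF V] pA AV by blast
  have pPA: "psd (\<Phi> A)" using pos pA by (simp add: positive_map_def)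
  obtain U lam where U: "unitary U" and PU: "\<Phi> A = LL U lam"
    using spectral pPA unfolding psd_def by blast
  define u where "u = colv U"
  have onb: "orthonormal_basis u" using colv_orth[OF U] by (simp add: orthonormal_basis_def u_def)
  have u1: "cinner (u j) (u j) = 1" for j using colv_orth[OF U] by (simp add: u_def)
  have cu: "cinner (\<Phi> A *v u j) (u j) = complex_of_real (lam j)" for j
    unfolding PU u_def using LL_col[OF U] colv_orth[OF U] by (simp add: cinner_scale_left)
  have Gu: "G (u j) (\<Phi> (LL V a)) = lam j" for j using cu by (simp add: G_def AV[symmetric])
  have lam0: "lam j \<ge> 0" for j using LL_eig_nonneg[OF U] pPA PU by metis
  define T where "T = sum a UNIV"
  define Sfun where "Sfun = (\<lambda>u :: 'm \<Rightarrow> complex^'m. (\<Sum>j\<in>UNIV. Re (cinner (\<Phi> (matfun f (mabs (A - cscale (cinner (\<Phi> A *v u j) (u j)) (mat 1)))) *v u j) (u j))))"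
  have lhs: "Re (trace (matfun f (\<Phi> A))) = (\<Sum>j\<in>UNIV. f (lam j))"
    unfolding PU matfun_eq[OF U] trace_LL[OF U] by simp
  have rhs1: "Re (trace (\<Phi> (matfun f A))) = (\<Sum>j\<in>UNIV. G (u j) (\<Phi> (LL V (\<lambda>k. f (a k)))))"
    unfolding AV matfun_eq[OF V] trace_cols[OF U, symmetric] by (simp add: G_def u_def)
  have Su: "Sfun u = (\<Sum>j\<in>UNIV. G (u j) (\<Phi> (LL V (\<lambda>k. f \<bar>a k - lam j\<bar>))))"
    unfolding Sfun_def cu by (simp add: AV F_form[OF V] G_def)
  have "(\<Sum>j\<in>UNIV. f (lam j)) \<le> (\<Sum>j\<in>UNIV. G (u j) (\<Phi> (LL V (\<lambda>k. f (a k)))) - G (u j) (\<Phi> (LL V (\<lambda>k. f \<bar>a k - lam j\<bar>))))"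
    by (intro sum_mono key_ineq[OF lin pos un V a0 u1 sq] Gu[symmetric] lam0)
  then have main: "Re (trace (matfun f (\<Phi> A))) \<le> Re (trace (\<Phi> (matfun f A))) - Sfun u"
    unfolding lhs rhs1 Su by (simp add: sum_subtractf)
  obtain K where K: "\<forall>x\<in>{0..T}. \<bar>f x\<bar> \<le> K"
  proof -
    have "compact (f ` {0..T})"
      by (rule compact_continuous_image[OF continuous_on_subset[OF cf]]) auto
    then obtain B where "\<forall>y\<in>f ` {0..T}. norm y \<le> B" using compact_imp_bounded bounded_iff by metis
    then show ?thesis using that by auto
  qed
  have lowb: "- (real CARD('m) * K) \<le> Sfun w" if w: "w \<in> {u. orthonormal_basis u}" for w
  proof -
    have w1: "cinner (w j) (w j) = 1" for j using w by (simp add: orthonormal_basis_def)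
    have tm: "- K \<le> Re (cinner (\<Phi> (matfun f (mabs (A - cscale (cinner (\<Phi> A *v w j) (w j)) (mat 1)))) *v w j) (w j))" for j
    proof -
      define s where "s = G (w j) (\<Phi> A)"
      have cs: "cinner (\<Phi> A *v w j) (w j) = complex_of_real s"
        unfolding s_def G_def using hermitian_real pPA unfolding psd_def by blast
      have s0: "0 \<le> s" unfolding s_def by (rule G_psd[OF pPA])
      have sT: "s \<le> sum a UNIV" unfolding s_def AV by (rule upper_s[OF lin pos un V a0 w1])
      have "- K \<le> G (w j) (\<Phi> (LL V (\<lambda>k. f \<bar>a k - s\<bar>)))"
        by (rule lower_F[OF lin pos un V a0 w1 s0 sT K[unfolded T_def]])
      then show ?thesis unfolding cs unfolding AV F_form[OF V] G_def .
    qed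
    have "(\<Sum>j\<in>(UNIV::'m set). - K) \<le> Sfun w" unfolding Sfun_def by (intro sum_mono tm)
    then show ?thesis by simp
  qed
  have "(INF w \<in> {u. orthonormal_basis u}. Sfun w) \<le> Sfun u"
    by (rule cInf_lower) (use onb in simp, rule bdd_belowI2, use lowb in auto)
  then show ?thesis using main unfolding Sfun_def by linarith
qed

end
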